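(* For every real matrix $T$ with $d$ columns and every integer $p\ge1$, $$\frac{1}{d^p}\|T\|_2^{2p}\le F_p(s^2(T))\le\frac1d\|T\|_{2p}^{2p}.$$ Moreover, for every finite subgroup $G\subset O(d)$ acting irreducibly on $\mathbb{R}^d$ and every $x\in\mathbb{R}^d$, $$\frac{1}{d^p}\|T\|_2^{2p}|x|^{2p}\le\frac{1}{|G|}\sum_{U\in G}|TUx|^{2p}\le\frac1d\|T\|_{2p}^{2p}|x|^{2p},$$ i.e. orbits of any irreducible group form (not necessarily tight) $p$-frames.
   Context: $s^2(T)$ is the multiset of eigenvalues of $T^\dagger T$; $F_p(s^2(T))=\int_{S^{d-1}}|T\theta|^{2p}d\sigma(\theta)$ with $\sigma$ the normalized uniform measure on the unit sphere; for groups $G\subset O(d)$ whose only invariant homogeneous polynomials of degree $2p$ are multiples of $|x|^{2p}$ this equals $\frac1{|G|}\sum_{U\in G}|TU\theta|^{2p}$ for every unit $\theta$. $\|T\|_n=(\sum_is_i^n)^{1/n}$ is the Schatten norm of $T$ ($s_i$ singular values). Irreducible: no subspace other than $\{0\},\mathbb{R}^d$ is invariant under all of $G$. *)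

theory Defs
  imports "HOL-Analysis.Analysis" "HOL-Computational_Algebra.Polynomial"
begin

text \<open>Normalized uniform (surface) measure on the unit sphere of real^'n, realised as
 the radial projection of the normalized Lebesgue measure on the unit ball
 (the cone-measure construction of the normalized surface measure).\<close>
definition sphere_measure :: "(real^'n) measure" where
  "sphere_measure = distr (uniform_measure lborel (ball 0 1)) borel (\<lambda>x. x /\<^sub>R norm x)"

definition charpoly :: "real^'n^'n \<Rightarrow> real poly" where
  "charpoly A = det (\<chi> i j. (if i = j then [:0, 1:] else 0) - [: A $ i $ j :])"

definition sq_sing_vals :: "real^'n^'m \<Rightarrow> real multiset" where
  "sq_sing_vals T = proots (charpoly (transpose T ** T))"

definition schatten_norm :: "real^'n^'m \<Rightarrow> nat \<Rightarrow> real" where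
  "schatten_norm T q = (\<Sum>\<^sub># (image_mset (\<lambda>l. sqrt l ^ q) (sq_sing_vals T))) powr (1 / real q)"

text \<open>F_p(s^2(T)) = integral over the sphere of |T theta|^(2p).\<close>
definition Fp :: "nat \<Rightarrow> real^'n^'m \<Rightarrow> real" where
  "Fp p T = integral\<^sup>L sphere_measure (\<lambda>\<theta>. norm (T *v \<theta>) ^ (2 * p))"

definition finite_orth_group :: "(real^'n^'n) set \<Rightarrow> bool" where
  "finite_orth_group G \<longleftrightarrow> finite G \<and> G \<subseteq> {U. orthogonal_matrix U} \<and> mat 1 \<in> G
     \<and> (\<forall>U\<in>G. \<forall>V\<in>G. U ** V \<in> G) \<and> (\<forall>U\<in>G. matrix_inv U \<in> G)"

definition acts_irreducibly :: "(real^'n^'n) set \<Rightarrow> bool" where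
  "acts_irreducibly G \<longleftrightarrow> (\<forall>W. subspace W \<and> (\<forall>U\<in>G. (\<lambda>x. U *v x) ` W \<subseteq> W)
       \<longrightarrow> W = {0} \<or> W = UNIV)"

end

theory Submission
  imports Defs "HOL-Probability.Probability_Measure"
begin

lemma sym_dot:
  fixes A :: "real^'n^'n"
  assumes "transpose A = A"
  shows "x \<bullet> (A *v y) = (A *v x) \<bullet> y"
proof -
  have "x \<bullet> (A *v y) = (x v* A) \<bullet> y" by (simp add: dot_lmul_matrix)
  also have "x v* A = A *v x" by (metis assms vector_transpose_matrix)
  finally show ?thesis .
qed

lemma quad_ineq_zero:
  fixes b c :: real
  assumes "\<And>t. 2 * t * b + t^2 * c \<le> 0"
  shows "b = 0"
proof (rule ccontr)
  assume "b \<noteq> 0"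
  define s where "s = 1 / (\<bar>c\<bar> + 1)"
  have s: "s > 0" "s * \<bar>c\<bar> < 1" unfolding s_def by (auto simp: field_simps)
  have "2 * (s*b) * b + (s*b)^2 * c \<le> 0" by (rule assms)
  hence "b^2 * (s * (2 + s * c)) \<le> 0" by (simp add: power2_eq_square algebra_simps)
  moreover have "b^2 > 0" using \<open>b \<noteq> 0\<close> by simp
  moreover have "s * (2 + s * c) > 0"
  proof -
    have "s * c \<ge> - (s * \<bar>c\<bar>)" using s by (simp add: abs_if mult_left_mono_neg)
    thus ?thesis using s by (intro mult_pos_pos) auto
  qed
  ultimately show False by (metis mult_pos_pos not_less)
qed

lemma eigvec_exists:
  fixes A :: "real^'n^'n"
  assumes sym: "transpose A = A" and S: "subspace S" "S \<noteq> {0}" and inv: "\<And>x. x \<in> S \<Longrightarrow> A *v x \<in> S"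
  obtains v \<mu> where "v \<in> S" "norm v = 1" "A *v v = \<mu> *\<^sub>R v"
proof -
  let ?K = "S \<inter> sphere 0 1"
  have cK: "compact ?K" by (simp add: S(1) closed_subspace closed_Int_compact)
  obtain w where w: "w \<in> S" "w \<noteq> 0" using S subspace_0 by blast
  have "w /\<^sub>R norm w \<in> ?K" using w S(1) by (simp add: subspace_scale)
  hence neK: "?K \<noteq> {}" by blast
  have cq: "continuous_on ?K (\<lambda>x. x \<bullet> (A *v x))"
    by (intro continuous_intros)
  obtain v where v: "v \<in> ?K" and vmax0: "\<forall>y\<in>?K. y \<bullet> (A *v y) \<le> v \<bullet> (A *v v)"
    using continuous_attains_sup[OF cK neK cq] by blast
  have vmax: "y \<bullet> (A *v y) \<le> v \<bullet> (A *v v)" if "y \<in> ?K" for y using vmax0 that by blast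
  define l where "l = v \<bullet> (A *v v)"
  have vS: "v \<in> S" and nv: "norm v = 1" using v by auto
  have bound: "y \<bullet> (A *v y) \<le> l * (y \<bullet> y)" if "y \<in> S" for y
  proof (cases "y = 0")
    case True thus ?thesis by simp
  next
    case False
    let ?z = "y /\<^sub>R norm y"
    have "?z \<in> ?K" using that False S(1) by (simp add: subspace_scale)
    hence "?z \<bullet> (A *v ?z) \<le> l" using vmax l_def by blast
    moreover have "?z \<bullet> (A *v ?z) = (y \<bullet> (A *v y)) / (y \<bullet> y)"
      using False by (simp add: matrix_vector_mult_scaleR power2_norm_eq_inner[symmetric] power2_eq_square divide_inverse mult.commute)
    moreover have "y \<bullet> y > 0" using False by simp
    ultimately show ?thesis by (simp add: divide_le_eq)
  qed
  have perp: "w \<bullet> (A *v v) = 0" if "w \<in> S" "w \<bullet> v = 0" for w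
  proof (rule quad_ineq_zero[where c = "w \<bullet> (A *v w) - l * (w \<bullet> w)"])
    fix t :: real
    have "v + t *\<^sub>R w \<in> S" using S(1) vS that(1) by (simp add: subspace_add subspace_scale)
    from bound[OF this]
    have I0: "(v + t *\<^sub>R w) \<bullet> (A *v (v + t *\<^sub>R w)) \<le> l * ((v + t *\<^sub>R w) \<bullet> (v + t *\<^sub>R w))" .
    have E1: "(v + t *\<^sub>R w) \<bullet> (A *v (v + t *\<^sub>R w)) = l + 2 * t * (w \<bullet> (A *v v)) + t^2 * (w \<bullet> (A *v w))"
    proof -
      have e: "v \<bullet> (A *v w) = w \<bullet> (A *v v)" using sym_dot[OF sym, of v w] by (simp add: inner_commute)
      have "(v + t *\<^sub>R w) \<bullet> (A *v (v + t *\<^sub>R w)) = v \<bullet> (A *v v) + t * (v \<bullet> (A *v w)) + t * (w \<bullet> (A *v v)) + t * t * (w \<bullet> (A *v w))"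
        by (simp add: matrix_vector_right_distrib matrix_vector_mult_scaleR inner_add_left inner_add_right distrib_left)
      thus ?thesis using e unfolding l_def by (simp add: power2_eq_square)
    qed
    have E2: "(v + t *\<^sub>R w) \<bullet> (v + t *\<^sub>R w) = 1 + t^2 * (w \<bullet> w)"
    proof -
      have "(v + t *\<^sub>R w) \<bullet> (v + t *\<^sub>R w) = v \<bullet> v + 2 * t * (w \<bullet> v) + t * t * (w \<bullet> w)"
        by (simp add: inner_add_left inner_add_right inner_commute)
      thus ?thesis using nv that(2) by (simp add: power2_eq_square norm_eq_1)
    qed
    have "l + 2 * t * (w \<bullet> (A *v v)) + t^2 * (w \<bullet> (A *v w)) \<le> l * (1 + t^2 * (w \<bullet> w))"
      using I0 unfolding E1 E2 .
    thus "2 * t * (w \<bullet> (A *v v)) + t^2 * (w \<bullet> (A *v w) - l * (w \<bullet> w)) \<le> 0"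
      by (simp add: algebra_simps)
  qed
  define z where "z = A *v v - l *\<^sub>R v"
  have zS: "z \<in> S" unfolding z_def using inv[OF vS] vS S(1) by (simp add: subspace_diff subspace_scale)
  have vv: "v \<bullet> v = 1" using nv by (simp add: norm_eq_1)
  have zv: "z \<bullet> v = 0" unfolding z_def l_def using vv by (simp add: inner_diff_left inner_commute[of "A *v v" v])
  have "z \<bullet> z = z \<bullet> (A *v v) - l * (z \<bullet> v)" unfolding z_def by (simp add: inner_diff_right)
  hence "z \<bullet> z = 0" using perp[OF zS zv] zv by simp
  hence "z = 0" by simp
  hence "A *v v = l *\<^sub>R v" unfolding z_def by simp
  thus ?thesis using that vS nv by blast
qed

lemma spectral_subspace:
  fixes A :: "real^'n^'n"
  assumes sym: "transpose A = A"
  shows "subspace S \<Longrightarrow> (\<forall>x\<in>S. A *v x \<in> S) \<Longrightarrow> \<exists>B. B \<subseteq> S \<and> pairwise orthogonal B \<and> (\<forall>b\<in>B. norm b = 1)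
            \<and> (\<forall>b\<in>B. \<exists>\<mu>. A *v b = \<mu> *\<^sub>R b) \<and> span B = S"
proof (induction "dim S" arbitrary: S rule: less_induct)
  case less
  show ?case
  proof (cases "S = {0}")
    case True
    thus ?thesis by (intro exI[of _ "{}"]) auto
  next
    case False
    obtain v \<mu> where v: "v \<in> S" "norm v = 1" "A *v v = \<mu> *\<^sub>R v"
      using eigvec_exists[OF sym less.prems(1) False] less.prems(2) by metis
    define S' where "S' = S \<inter> {w. v \<bullet> w = 0}"
    have sS': "subspace S'" unfolding S'_def using less.prems(1) subspace_hyperplane[of v] by (rule subspace_inter)
    have iS': "\<forall>x\<in>S'. A *v x \<in> S'"
    proof
      fix x assume x: "x \<in> S'"
      have "v \<bullet> (A *v x) = (A *v v) \<bullet> x" by (rule sym_dot[OF sym])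
      also have "\<dots> = 0" using x v(3) unfolding S'_def by simp
      finally show "A *v x \<in> S'" using x less.prems(2) unfolding S'_def by auto
    qed
    have vv: "v \<bullet> v = 1" using v(2) by (simp add: norm_eq_1)
    have "S' \<subset> S" using v(1) vv unfolding S'_def by force
    hence "dim S' < dim S"
      using dim_psubset[of S' S] span_eq_iff[of S] span_eq_iff[of S'] less.prems(1) sS'
      by metis
    from less.hyps[OF this sS' iS'] obtain B' where B': "B' \<subseteq> S'" "pairwise orthogonal B'"
      "\<forall>b\<in>B'. norm b = 1" "\<forall>b\<in>B'. \<exists>\<mu>. A *v b = \<mu> *\<^sub>R b" "span B' = S'" by blast
    show ?thesis
    proof (intro exI[of _ "insert v B'"] conjI)
      show "insert v B' \<subseteq> S" using B'(1) v(1) unfolding S'_def by auto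
      show "pairwise orthogonal (insert v B')"
        using B'(1,2) unfolding S'_def by (intro pairwise_orthogonal_insert) (auto simp: orthogonal_def)
      show "\<forall>b\<in>insert v B'. norm b = 1" using B'(3) v(2) by auto
      show "\<forall>b\<in>insert v B'. \<exists>\<mu>. A *v b = \<mu> *\<^sub>R b" using B'(4) v(3) by auto
      show "span (insert v B') = S"
      proof
        show "span (insert v B') \<subseteq> S"
          using B'(1) v(1) less.prems(1) unfolding S'_def by (intro span_minimal) auto
        show "S \<subseteq> span (insert v B')"
        proof
          fix x assume x: "x \<in> S"
          have "x - (v \<bullet> x) *\<^sub>R v \<in> S'" unfolding S'_def using x v(1) vv less.prems(1)
            by (auto simp: subspace_diff subspace_scale inner_diff_right)
          hence "x - (v \<bullet> x) *\<^sub>R v \<in> span (insert v B')" using B'(5) span_mono[of B' "insert v B'"] by auto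
          moreover have "(v \<bullet> x) *\<^sub>R v \<in> span (insert v B')" by (simp add: span_base span_scale)
          ultimately have "(x - (v \<bullet> x) *\<^sub>R v) + (v \<bullet> x) *\<^sub>R v \<in> span (insert v B')" by (rule span_add)
          thus "x \<in> span (insert v B')" by simp
        qed
      qed
    qed
  qed
qed

lemma spectral:
  fixes A :: "real^'n^'n"
  assumes sym: "transpose A = A"
  obtains u :: "'n \<Rightarrow> real^'n" and lam :: "'n \<Rightarrow> real"
  where "\<And>k. norm (u k) = 1" "\<And>k j. k \<noteq> j \<Longrightarrow> u k \<bullet> u j = 0" "\<And>k. A *v u k = lam k *\<^sub>R u k"
    "\<And>y. (\<Sum>k\<in>UNIV. (y \<bullet> u k) *\<^sub>R u k) = y"
proof -
  obtain B where B: "pairwise orthogonal B" "\<forall>b\<in>B. norm b = 1"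
      "\<forall>b\<in>B. \<exists>\<mu>. A *v b = \<mu> *\<^sub>R b" "span B = UNIV"
    using spectral_subspace[OF sym, of UNIV] by auto
  have z: "0 \<notin> B" using B(2) by force
  have ind: "independent B" by (rule pairwise_orthogonal_independent[OF B(1) z])
  have fin: "finite B" by (rule pairwise_orthogonal_imp_finite[OF B(1)])
  have "card B = dim (UNIV :: (real^'n) set)" using dim_span_eq_card_independent[OF ind] B(4) by simp
  hence cB: "card B = CARD('n)" by simp
  obtain g where g: "bij_betw g (UNIV :: 'n set) B"
    using finite_same_card_bij[of "UNIV :: 'n set" B] fin cB by auto
  define lam where "lam k = (SOME \<mu>. A *v g k = \<mu> *\<^sub>R g k)" for k
  have gB: "g k \<in> B" for k using g by (auto simp: bij_betw_def)
  show ?thesis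
  proof
    show "norm (g k) = 1" for k using B(2) gB by auto
    show "g k \<bullet> g j = 0" if "k \<noteq> j" for k j
    proof -
      have "g k \<noteq> g j" using g that by (auto simp: bij_betw_def inj_on_def)
      thus ?thesis using B(1) gB[of k] gB[of j] by (auto simp: pairwise_def orthogonal_def)
    qed
    show "A *v g k = lam k *\<^sub>R g k" for k
      unfolding lam_def using B(3) gB[of k] by (metis (mono_tags, lifting) someI_ex)
    show "(\<Sum>k\<in>UNIV. (y \<bullet> g k) *\<^sub>R g k) = y" for y
    proof -
      have "(\<Sum>k\<in>UNIV. (y \<bullet> g k) *\<^sub>R g k) = (\<Sum>b\<in>B. (y \<bullet> b) *\<^sub>R b)"
        by (rule sum.reindex_bij_betw[OF g])
      also have "\<dots> = y" using orthonormal_basis_expand[OF B(1) _ _ fin] B(2,4) by auto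
      finally show ?thesis .
    qed
  qed
qed


lemma sum_singletons_mset:
  "finite A \<Longrightarrow> (\<Sum>k\<in>A. {#f k#}) = image_mset f (mset_set A)"
  by (induction A rule: finite_induct) auto

lemma charpoly_spectral:
  fixes A :: "real^'n^'n" and u :: "'n \<Rightarrow> real^'n" and lam :: "'n \<Rightarrow> real"
  assumes Aeq: "\<And>i j. A$i$j = (\<Sum>k\<in>UNIV. lam k * (u k $ i) * (u k $ j))"
    and orth: "\<And>i j. (\<Sum>k\<in>UNIV. u k $ i * u k $ j) = (if i = j then 1 else 0)"
  shows "proots (charpoly A) = image_mset lam (mset_set UNIV)"
proof -
  define P :: "real poly^'n^'n" where "P = (\<chi> i k. [:u k $ i:])"
  define D :: "real poly^'n^'n" where "D = (\<chi> k l. if k = l then [:- lam k, 1:] else 0)"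
  have M: "(\<chi> i j. (if i = j then [:0,1:] else 0) - [:A$i$j:]) = P ** D ** transpose P"
  proof (rule vec_eq_iff[THEN iffD2], intro allI, rule vec_eq_iff[THEN iffD2], intro allI)
    fix i j
    have "(P ** D ** transpose P) $ i $ j = (\<Sum>l\<in>UNIV. [:u l $ i:] * [:- lam l, 1:] * [:u l $ j:])"
      by (simp add: matrix_matrix_mult_def transpose_def P_def D_def if_distrib sum.delta cong: if_cong)
    also have "\<dots> = (if i = j then [:0,1:] else 0) - [:A$i$j:]"
    proof (rule poly_eq_poly_eq_iff[THEN iffD1], rule ext)
      fix x :: real
      have "(\<Sum>l\<in>UNIV. u l $ i * (x - lam l) * u l $ j) = x * (\<Sum>l\<in>UNIV. u l $ i * u l $ j) - (\<Sum>l\<in>UNIV. lam l * u l $ i * u l $ j)"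
        by (simp add: sum_distrib_left sum_subtractf[symmetric] algebra_simps)
      thus "poly (\<Sum>l\<in>UNIV. [:u l $ i:] * [:- lam l, 1:] * [:u l $ j:]) x = poly ((if i = j then [:0,1:] else 0) - [:A$i$j:]) x"
        by (simp add: poly_sum orth Aeq[of i j] algebra_simps)
    qed
    finally show "(\<chi> i j. (if i = j then [:0,1:] else 0) - [:A$i$j:]) $ i $ j = (P ** D ** transpose P) $ i $ j"
      by simp
  qed
  have PP: "P ** transpose P = mat 1"
  proof (rule vec_eq_iff[THEN iffD2], intro allI, rule vec_eq_iff[THEN iffD2], intro allI)
    fix i j
    have "(P ** transpose P) $ i $ j = (\<Sum>l\<in>UNIV. [:u l $ i:] * [:u l $ j:])"
      by (simp add: matrix_matrix_mult_def transpose_def P_def)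
    also have "\<dots> = [:\<Sum>l\<in>UNIV. u l $ i * u l $ j:]"
      by (rule poly_eq_poly_eq_iff[THEN iffD1], rule ext) (simp add: poly_sum mult_ac)
    also have "\<dots> = mat 1 $ i $ j" by (simp add: orth mat_def)
    finally show "(P ** transpose P) $ i $ j = mat 1 $ i $ j" .
  qed
  have "charpoly A = det (P ** D ** transpose P)" unfolding charpoly_def M ..
  also have "\<dots> = det D * det (P ** transpose P)" by (simp add: det_mul)
  also have "\<dots> = det D" by (simp add: PP)
  also have "\<dots> = (\<Prod>k\<in>UNIV. [:- lam k, 1:])" by (subst det_diagonal) (auto simp: D_def)
  finally have "proots (charpoly A) = (\<Sum>k\<in>UNIV. proots [:- lam k, 1:])"
    by (simp add: proots_prod)
  also have "\<dots> = (\<Sum>k\<in>UNIV. {#lam k#})" by simp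
  also have "\<dots> = image_mset lam (mset_set UNIV)" by (simp add: sum_singletons_mset)
  finally show ?thesis .
qed


lemma T_decomp:
  fixes T :: "real^'n^'m"
  obtains u :: "'n \<Rightarrow> real^'n" and lam :: "'n \<Rightarrow> real"
  where "\<And>k. norm (u k) = 1" "\<And>k j. k \<noteq> j \<Longrightarrow> u k \<bullet> u j = 0"
    "\<And>y. (\<Sum>k\<in>UNIV. (y \<bullet> u k) *\<^sub>R u k) = y"
    "\<And>k. lam k \<ge> 0"
    "sq_sing_vals T = image_mset lam (mset_set UNIV)"
    "\<And>y. norm (T *v y) ^ 2 = (\<Sum>k\<in>UNIV. lam k * (u k \<bullet> y)^2)"
proof -
  define A where "A = transpose T ** T"
  have sym: "transpose A = A" unfolding A_def by (simp add: matrix_transpose_mul)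
  obtain u :: "'n \<Rightarrow> real^'n" and lam :: "'n \<Rightarrow> real" where u1: "\<And>k. norm (u k) = 1" and u2: "\<And>k j. k \<noteq> j \<Longrightarrow> u k \<bullet> u j = 0"
    and ev: "\<And>k. A *v u k = lam k *\<^sub>R u k" and ex: "\<And>y. (\<Sum>k\<in>UNIV. (y \<bullet> u k) *\<^sub>R u k) = y"
    using spectral[OF sym] by blast
  have quad: "y \<bullet> (A *v y) = norm (T *v y) ^ 2" for y
  proof -
    have "y \<bullet> (A *v y) = y \<bullet> ((T *v y) v* T)"
      unfolding A_def by (simp add: matrix_vector_mul_assoc[symmetric])
    also have "\<dots> = ((T *v y) v* T) \<bullet> y" by (simp add: inner_commute)
    also have "\<dots> = (T *v y) \<bullet> (T *v y)" by (simp add: dot_lmul_matrix)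
    finally show ?thesis by (simp add: power2_norm_eq_inner)
  qed
  have Ay: "A *v y = (\<Sum>k\<in>UNIV. (y \<bullet> u k) *\<^sub>R (lam k *\<^sub>R u k))" for y
  proof -
    have "A *v y = A *v (\<Sum>k\<in>UNIV. (y \<bullet> u k) *\<^sub>R u k)" by (simp add: ex)
    also have "\<dots> = (\<Sum>k\<in>UNIV. (y \<bullet> u k) *\<^sub>R (A *v u k))"
      by (simp add: linear_sum[OF matrix_vector_mul_linear] matrix_vector_mult_scaleR)
    finally show ?thesis by (simp add: ev)
  qed
  have qy: "norm (T *v y) ^ 2 = (\<Sum>k\<in>UNIV. lam k * (u k \<bullet> y)^2)" for y
    unfolding quad[symmetric] Ay by (simp add: inner_sum_right power2_eq_square inner_commute algebra_simps)
  have lam0: "lam k \<ge> 0" for k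
  proof -
    have "u k \<bullet> (A *v u k) = lam k" using u1[of k] by (simp add: ev norm_eq_1)
    thus ?thesis using quad[of "u k"] by (metis zero_le_power2)
  qed
  have Aeq: "A$i$j = (\<Sum>k\<in>UNIV. lam k * (u k $ i) * (u k $ j))" for i j
  proof -
    have "A$i$j = (A *v axis j 1) $ i" by (simp add: matrix_vector_mult_basis column_def)
    also have "\<dots> = (\<Sum>k\<in>UNIV. lam k * (u k $ i) * (u k $ j))"
      by (simp add: Ay inner_axis' algebra_simps)
    finally show ?thesis .
  qed
  have orth: "(\<Sum>k\<in>UNIV. u k $ i * u k $ j) = (if i = j then 1 else 0)" for i j
  proof -
    have "(if i = j then 1 else 0) = (axis j (1::real)) $ i" by (simp add: axis_def)
    also have "\<dots> = (\<Sum>k\<in>UNIV. (axis j 1 \<bullet> u k) *\<^sub>R u k) $ i" by (simp only: ex)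
    also have "\<dots> = (\<Sum>k\<in>UNIV. u k $ i * u k $ j)" by (simp add: inner_axis' mult.commute)
    finally show ?thesis by simp
  qed
  have "sq_sing_vals T = image_mset lam (mset_set UNIV)"
    unfolding sq_sing_vals_def A_def[symmetric] by (rule charpoly_spectral[OF Aeq orth])
  thus ?thesis using that u1 u2 ex lam0 qy by blast
qed


lemma tangent_power:
  fixes a b :: real
  assumes "a \<ge> 0" "b \<ge> 0"
  shows "a^p + real p * a^(p - 1) * (b - a) \<le> b^p"
proof (cases p)
  case 0 thus ?thesis by simp
next
  case (Suc n)
  have key: "(b - a) * ((\<Sum>i<Suc n. b^i * a^(n-i)) - real (Suc n) * a^n) \<ge> 0"
  proof (cases "a \<le> b")
    case True
    have "(\<Sum>i<Suc n. b^i * a^(n-i)) \<ge> (\<Sum>i<Suc n. a^i * a^(n-i))"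
      using True assms by (intro sum_mono mult_right_mono power_mono) auto
    also have "(\<Sum>i<Suc n. a^i * a^(n-i)) = real (Suc n) * a^n"
      by (simp add: power_add[symmetric])
    finally show ?thesis using True by simp
  next
    case False
    have "(\<Sum>i<Suc n. b^i * a^(n-i)) \<le> (\<Sum>i<Suc n. a^i * a^(n-i))"
      using False assms by (intro sum_mono mult_right_mono power_mono) auto
    also have "(\<Sum>i<Suc n. a^i * a^(n-i)) = real (Suc n) * a^n"
      by (simp add: power_add[symmetric])
    finally show ?thesis using False by (intro mult_nonpos_nonpos) auto
  qed
  have "b^Suc n - a^Suc n = (b - a) * (\<Sum>i<Suc n. b^i * a^(n-i))" by (rule diff_power_eq_sum)
  thus ?thesis using key Suc by (simp add: algebra_simps)
qed

lemma power_mean_sum: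
  fixes w lam :: "'k \<Rightarrow> real"
  assumes fin: "finite I" and w0: "\<And>k. k \<in> I \<Longrightarrow> w k \<ge> 0" and l0: "\<And>k. k \<in> I \<Longrightarrow> lam k \<ge> 0" and p: "p \<ge> 1"
  shows "(\<Sum>k\<in>I. lam k * w k)^p \<le> (\<Sum>k\<in>I. w k)^(p - 1) * (\<Sum>k\<in>I. lam k ^ p * w k)"
proof -
  define W where "W = (\<Sum>k\<in>I. w k)"
  define F where "F = (\<Sum>k\<in>I. lam k * w k)"
  have W0: "W \<ge> 0" unfolding W_def using w0 by (simp add: sum_nonneg)
  show ?thesis
  proof (cases "W = 0")
    case True
    hence "\<forall>k\<in>I. w k = 0" using sum_nonneg_eq_0_iff[OF fin] w0 unfolding W_def by blast
    hence "F = 0" unfolding F_def by simp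
    moreover have "0 \<le> W^(p-1) * (\<Sum>k\<in>I. lam k ^ p * w k)"
      using W0 l0 w0 by (intro mult_nonneg_nonneg zero_le_power sum_nonneg) auto
    ultimately show ?thesis using p unfolding F_def[symmetric] W_def[symmetric] by (simp add: power_0_left)
  next
    case False
    hence Wp: "W > 0" using W0 by simp
    define m where "m = F / W"
    have F0: "F \<ge> 0" unfolding F_def using w0 l0 by (simp add: sum_nonneg)
    have m0: "m \<ge> 0" unfolding m_def using F0 W0 by simp
    have "(\<Sum>k\<in>I. w k * (m^p + real p * m^(p - 1) * (lam k - m))) \<le> (\<Sum>k\<in>I. w k * lam k ^ p)"
      using tangent_power[OF m0 l0] w0 by (intro sum_mono mult_left_mono) auto
    moreover have "(\<Sum>k\<in>I. w k * (m^p + real p * m^(p - 1) * (lam k - m))) = W * m^p + real p * m^(p-1) * (F - W * m)"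
      unfolding W_def F_def by (simp add: algebra_simps sum.distrib sum_distrib_left sum_distrib_right sum_subtractf)
    moreover have "F - W * m = 0" unfolding m_def using Wp by simp
    ultimately have "W * m^p \<le> (\<Sum>k\<in>I. lam k ^ p * w k)" by (simp add: mult.commute)
    hence "W^(p-1) * (W * m^p) \<le> W^(p-1) * (\<Sum>k\<in>I. lam k ^ p * w k)"
      using W0 by (intro mult_left_mono) auto
    moreover have "W^(p-1) * (W * m^p) = F^p"
    proof -
      have "W^(p-1) * (W * m^p) = W^p * m^p" using p by (simp add: power_eq_if[of W p] mult.assoc)
      also have "\<dots> = (W * m)^p" by (simp add: power_mult_distrib)
      also have "W * m = F" unfolding m_def using Wp by simp
      finally show ?thesis .
    qed
    ultimately show ?thesis unfolding W_def F_def by simp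
  qed
qed


lemma (in prob_space) avg_core:
  fixes th :: "'a \<Rightarrow> real^'n" and u :: "'n \<Rightarrow> real^'n" and lam :: "'n \<Rightarrow> real"
  assumes meas: "th \<in> borel_measurable M"
    and bnd: "\<And>x. x \<in> space M \<Longrightarrow> norm (th x) \<le> r"
    and nr: "AE x in M. norm (th x) = r" and r0: "r \<ge> 0"
    and Ew: "\<And>k. (\<integral>x. (u k \<bullet> th x)^2 \<partial>M) = r^2 / CARD('n)"
    and lam0: "\<And>k. lam k \<ge> 0"
    and un: "\<And>k. norm (u k) = 1"
    and pars: "\<And>y. (\<Sum>k\<in>UNIV. (u k \<bullet> y)^2) = norm y ^ 2"
    and p: "p \<ge> 1"
  shows "((\<Sum>k\<in>UNIV. lam k) / CARD('n))^p * r^(2*p) \<le> (\<integral>x. (\<Sum>k\<in>UNIV. lam k * (u k \<bullet> th x)^2)^p \<partial>M)"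
    and "(\<integral>x. (\<Sum>k\<in>UNIV. lam k * (u k \<bullet> th x)^2)^p \<partial>M) \<le> (1 / CARD('n)) * (\<Sum>k\<in>UNIV. lam k ^ p) * r^(2*p)"
proof -
  define f where "f x = (\<Sum>k\<in>UNIV. lam k * (u k \<bullet> th x)^2)" for x
  define d where "d = real CARD('n)"
  have d0: "d > 0" unfolding d_def by simp
  have wb: "(u k \<bullet> th x)^2 \<le> r^2" if "x \<in> space M" for k x
  proof -
    have "\<bar>u k \<bullet> th x\<bar> \<le> norm (u k) * norm (th x)" by (rule Cauchy_Schwarz_ineq2)
    also have "\<dots> \<le> r" using bnd[OF that] un[of k] by simp
    finally show ?thesis using r0 by (metis abs_ge_zero power2_abs power_mono)
  qed
  have mw[measurable]: "(\<lambda>x. (u k \<bullet> th x)^2) \<in> borel_measurable M" for k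
    using meas by measurable
  have mf[measurable]: "f \<in> borel_measurable M" unfolding f_def by measurable
  have intw: "integrable M (\<lambda>x. (u k \<bullet> th x)^2)" for k
    by (rule integrable_const_bound[where B="r^2"]) (use wb in auto)
  have f0: "f x \<ge> 0" for x unfolding f_def using lam0 by (intro sum_nonneg mult_nonneg_nonneg) auto
  have fb: "f x \<le> (\<Sum>k\<in>UNIV. lam k) * r^2" if "x \<in> space M" for x
    unfolding f_def sum_distrib_right using wb[OF that] lam0 by (intro sum_mono mult_left_mono) auto
  have intfp: "integrable M (\<lambda>x. f x ^ q)" for q
  proof (rule integrable_const_bound[where B="((\<Sum>k\<in>UNIV. lam k) * r^2)^q"])
    show "AE x in M. norm (f x ^ q) \<le> ((\<Sum>k\<in>UNIV. lam k) * r^2)^q"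
      using fb f0 by (intro AE_I2) (simp add: power_mono)
  qed measurable
  have Ef: "(\<integral>x. f x \<partial>M) = (\<Sum>k\<in>UNIV. lam k) / d * r^2"
  proof -
    have "(\<integral>x. f x \<partial>M) = (\<Sum>k\<in>UNIV. lam k * (\<integral>x. (u k \<bullet> th x)^2 \<partial>M))"
      unfolding f_def using intw by (simp add: integral_sum)
    also have "\<dots> = (\<Sum>k\<in>UNIV. lam k) / d * r^2"
      by (simp add: Ew d_def sum_distrib_right sum_divide_distrib)
    finally show ?thesis .
  qed
  define m where "m = (\<Sum>k\<in>UNIV. lam k) / d * r^2"
  have m0: "m \<ge> 0" unfolding m_def using lam0 d0 by (simp add: sum_nonneg)
  have "(\<integral>x. m^p + real p * m^(p-1) * (f x - m) \<partial>M) \<le> (\<integral>x. f x ^ p \<partial>M)"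
  proof (rule integral_mono)
    show "integrable M (\<lambda>x. m^p + real p * m^(p-1) * (f x - m))"
      using intfp[of 1] by simp
    show "integrable M (\<lambda>x. f x ^ p)" by (rule intfp)
    show "m^p + real p * m^(p-1) * (f x - m) \<le> f x ^ p" for x by (rule tangent_power[OF m0 f0])
  qed
  moreover have "(\<integral>x. m^p + real p * m^(p-1) * (f x - m) \<partial>M) = m^p"
  proof -
    have "(\<integral>x. m^p + real p * m^(p-1) * (f x - m) \<partial>M) = m^p + real p * m^(p-1) * ((\<integral>x. f x \<partial>M) - m)"
      using intfp[of 1] by (simp add: prob_space)
    thus ?thesis using Ef unfolding m_def by simp
  qed
  moreover have "m^p = ((\<Sum>k\<in>UNIV. lam k) / CARD('n))^p * r^(2*p)"
  proof -
    have "m = ((\<Sum>k\<in>UNIV. lam k) / CARD('n)) * r^2" unfolding m_def d_def by simp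
    thus ?thesis by (simp only: power_mult_distrib power_mult)
  qed
  ultimately show "((\<Sum>k\<in>UNIV. lam k) / CARD('n))^p * r^(2*p) \<le> (\<integral>x. (\<Sum>k\<in>UNIV. lam k * (u k \<bullet> th x)^2)^p \<partial>M)"
    unfolding f_def by simp
  have "(\<integral>x. f x ^ p \<partial>M) \<le> (\<integral>x. (r^2)^(p-1) * (\<Sum>k\<in>UNIV. lam k ^ p * (u k \<bullet> th x)^2) \<partial>M)"
  proof (rule integral_mono_AE)
    show "integrable M (\<lambda>x. f x ^ p)" by (rule intfp)
    show "integrable M (\<lambda>x. (r^2)^(p-1) * (\<Sum>k\<in>UNIV. lam k ^ p * (u k \<bullet> th x)^2))"
      using intw by simp
    show "AE x in M. f x ^ p \<le> (r^2)^(p-1) * (\<Sum>k\<in>UNIV. lam k ^ p * (u k \<bullet> th x)^2)"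
      using nr
    proof eventually_elim
      case (elim x)
      have "f x ^ p \<le> (\<Sum>k\<in>UNIV. (u k \<bullet> th x)^2)^(p - 1) * (\<Sum>k\<in>UNIV. lam k ^ p * (u k \<bullet> th x)^2)"
        unfolding f_def using lam0 p by (intro power_mean_sum) auto
      also have "(\<Sum>k\<in>UNIV. (u k \<bullet> th x)^2) = r^2" using pars elim by simp
      finally show ?case .
    qed
  qed
  also have "\<dots> = (r^2)^(p-1) * (\<Sum>k\<in>UNIV. lam k ^ p * (r^2 / d))"
    using intw by (simp add: integral_sum Ew d_def)
  also have "\<dots> = (1 / CARD('n)) * (\<Sum>k\<in>UNIV. lam k ^ p) * r^(2*p)"
  proof -
    have "(r^2)^(p-1) * r^2 = r^(2*p)" using p
      by (metis power_mult power_minus_mult less_le_trans zero_less_one)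
    hence "(r^2)^(p-1) * (\<Sum>k\<in>UNIV. lam k ^ p * (r^2 / d)) = (\<Sum>k\<in>UNIV. lam k ^ p) / d * r^(2*p)"
      by (simp add: sum_distrib_right[symmetric] sum_divide_distrib[symmetric] algebra_simps)
    thus ?thesis unfolding d_def by simp
  qed
  finally show "(\<integral>x. (\<Sum>k\<in>UNIV. lam k * (u k \<bullet> th x)^2)^p \<partial>M) \<le> (1 / CARD('n)) * (\<Sum>k\<in>UNIV. lam k ^ p) * r^(2*p)"
    unfolding f_def by simp
qed


lemma norm_sq_vec: "norm (z::real^'n) ^ 2 = (\<Sum>i\<in>UNIV. (z$i)^2)"
  unfolding power2_norm_eq_inner by (simp add: inner_vec_def power2_eq_square)

lemma orth_norm:
  fixes U :: "real^'n^'n"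
  assumes "orthogonal_matrix U"
  shows "norm (U *v x) = norm x"
proof -
  have "(U *v x) \<bullet> (U *v x) = ((U *v x) v* U) \<bullet> x" by (simp add: dot_lmul_matrix)
  also have "(U *v x) v* U = (transpose U ** U) *v x"
    by (simp add: matrix_vector_mul_assoc[symmetric])
  also have "transpose U ** U = mat 1" using assms by (simp add: orthogonal_matrix_def)
  finally have "(U *v x) \<bullet> (U *v x) = x \<bullet> x" by simp
  thus ?thesis by (simp add: norm_eq_sqrt_inner)
qed

lemma orth_adj:
  fixes U :: "real^'n^'n"
  shows "(U *v y) \<bullet> z = y \<bullet> (transpose U *v z)"
proof -
  have "(U *v y) \<bullet> z = z \<bullet> (U *v y)" by (simp add: inner_commute)
  also have "\<dots> = (z v* U) \<bullet> y" by (simp add: dot_lmul_matrix)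
  also have "z v* U = transpose U *v z" by simp
  finally show ?thesis by (simp add: inner_commute)
qed

lemma group_reindex:
  fixes G :: "(real^'n^'n) set"
  assumes fg: "finite_orth_group G" and V: "V \<in> G"
  shows "(\<Sum>U\<in>G. g (V ** U)) = (\<Sum>U\<in>G. g U)"
proof -
  have fin: "finite G" and orth: "\<And>U. U \<in> G \<Longrightarrow> orthogonal_matrix U"
    and cl: "\<And>U W. U \<in> G \<Longrightarrow> W \<in> G \<Longrightarrow> U ** W \<in> G"
    using fg unfolding finite_orth_group_def by auto
  have VV: "transpose V ** V = mat 1" using orth[OF V] by (simp add: orthogonal_matrix_def)
  have inj: "inj_on (\<lambda>U. V ** U) G"
  proof (rule inj_onI)
    fix U W assume "V ** U = V ** W"
    hence "transpose V ** (V ** U) = transpose V ** (V ** W)" by simp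
    thus "U = W" by (simp add: matrix_mul_assoc VV)
  qed
  have img: "(\<lambda>U. V ** U) ` G = G" using endo_inj_surj[OF fin _ inj] cl V by blast
  have "(\<Sum>U\<in>G. g (V ** U)) = (\<Sum>U\<in>(\<lambda>U. V ** U) ` G. g U)"
    by (simp add: sum.reindex[OF inj])
  also have "\<dots> = (\<Sum>U\<in>G. g U)" by (simp add: img)
  finally show ?thesis .
qed

lemma group_second_moment:
  fixes G :: "(real^'n^'n) set" and x w :: "real^'n"
  assumes fg: "finite_orth_group G" and irr: "acts_irreducibly G"
  shows "(\<Sum>U\<in>G. (w \<bullet> (U *v x))^2) = real (card G) * norm x ^ 2 * norm w ^ 2 / CARD('n)"
proof -
  have fin: "finite G" and orth: "\<And>U. U \<in> G \<Longrightarrow> orthogonal_matrix U"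
    using fg unfolding finite_orth_group_def by auto
  define M :: "real^'n^'n" where "M = (\<chi> i j. \<Sum>U\<in>G. (U *v x)$i * (U *v x)$j)"
  have Mv: "M *v y = (\<Sum>U\<in>G. (y \<bullet> (U *v x)) *\<^sub>R (U *v x))" for y
  proof -
    have "(M *v y)$i = (\<Sum>U\<in>G. (y \<bullet> (U *v x)) *\<^sub>R (U *v x))$i" for i
      by (simp add: M_def matrix_vector_mult_def inner_vec_def sum_distrib_left sum_distrib_right
           mult_ac sum.swap[of _ UNIV G])
    thus ?thesis by (simp add: vec_eq_iff)
  qed
  have sym: "transpose M = M" by (simp add: M_def transpose_def vec_eq_iff mult.commute)
  have quad: "y \<bullet> (M *v y) = (\<Sum>U\<in>G. (y \<bullet> (U *v x))^2)" for y
    by (simp add: Mv inner_sum_right power2_eq_square)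
  have comm: "M *v (V *v y) = V *v (M *v y)" if V: "V \<in> G" for V y
  proof -
    have VV: "transpose V ** V = mat 1" using orth[OF V] by (simp add: orthogonal_matrix_def)
    have "M *v (V *v y) = (\<Sum>U\<in>G. ((V *v y) \<bullet> (U *v x)) *\<^sub>R (U *v x))" by (rule Mv)
    also have "\<dots> = (\<Sum>U\<in>G. ((V *v y) \<bullet> ((V ** U) *v x)) *\<^sub>R ((V ** U) *v x))"
      by (rule group_reindex[OF fg V, symmetric])
    also have "\<dots> = (\<Sum>U\<in>G. (y \<bullet> (U *v x)) *\<^sub>R (V *v (U *v x)))"
    proof (rule sum.cong[OF refl])
      fix U
      have "(V *v y) \<bullet> ((V ** U) *v x) = y \<bullet> (transpose V *v (V *v (U *v x)))"
        by (simp add: orth_adj matrix_vector_mul_assoc)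
      also have "transpose V *v (V *v (U *v x)) = (transpose V ** V) *v (U *v x)"
        by (rule matrix_vector_mul_assoc)
      also have "\<dots> = U *v x" by (simp add: VV)
      finally show "((V *v y) \<bullet> ((V ** U) *v x)) *\<^sub>R ((V ** U) *v x) = (y \<bullet> (U *v x)) *\<^sub>R (V *v (U *v x))"
        by (simp add: matrix_vector_mul_assoc)
    qed
    also have "\<dots> = V *v (\<Sum>U\<in>G. (y \<bullet> (U *v x)) *\<^sub>R (U *v x))"
      by (simp add: linear_sum[OF matrix_vector_mul_linear] matrix_vector_mult_scaleR)
    finally show ?thesis by (simp add: Mv)
  qed
  obtain i0 :: 'n where True by blast
  have ne: "(UNIV :: (real^'n) set) \<noteq> {0}"
  proof
    assume "(UNIV :: (real^'n) set) = {0}"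
    hence "axis i0 (1::real) = 0" by blast
    thus False by (simp add: axis_eq_0_iff)
  qed
  obtain v \<mu> where v: "norm v = 1" "M *v v = \<mu> *\<^sub>R v"
    using eigvec_exists[OF sym subspace_UNIV ne] by blast
  define E where "E = {y. M *v y = \<mu> *\<^sub>R y}"
  have sE: "subspace E" unfolding E_def subspace_def
    by (simp add: matrix_vector_right_distrib matrix_vector_mult_scaleR scaleR_add_right)
  have iE: "\<forall>U\<in>G. (\<lambda>y. U *v y) ` E \<subseteq> E"
    using comm unfolding E_def by (auto simp: matrix_vector_mult_scaleR)
  have "v \<in> E" "v \<noteq> 0" using v unfolding E_def by auto
  hence "E = UNIV" using irr sE iE unfolding acts_irreducibly_def by blast
  hence Mmu: "M *v y = \<mu> *\<^sub>R y" for y unfolding E_def by blast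
  have trace: "real CARD('n) * \<mu> = real (card G) * norm x ^ 2"
  proof -
    have "real CARD('n) * \<mu> = (\<Sum>i\<in>UNIV. axis i 1 \<bullet> (M *v axis i 1))"
      by (simp add: Mmu inner_axis_axis)
    also have "\<dots> = (\<Sum>i\<in>UNIV. \<Sum>U\<in>G. ((U *v x) $ i)^2)"
      by (simp add: quad inner_axis')
    also have "\<dots> = (\<Sum>U\<in>G. norm (U *v x) ^ 2)"
      by (subst sum.swap) (simp add: norm_sq_vec)
    also have "\<dots> = (\<Sum>U\<in>G. norm x ^ 2)" by (simp add: orth_norm orth)
    finally show ?thesis by simp
  qed
  have "(\<Sum>U\<in>G. (w \<bullet> (U *v x))^2) = \<mu> * norm w ^ 2"
    by (simp add: quad[symmetric] Mmu power2_norm_eq_inner)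
  also have "\<dots> = real (card G) * norm x ^ 2 * norm w ^ 2 / CARD('n)"
    using trace by (simp add: field_simps)
  finally show ?thesis .
qed


lemma prod_Basis_cart: "(\<Prod>b\<in>(Basis::(real^'n) set). f b) = (\<Prod>i\<in>UNIV. f (axis i 1))"
proof -
  have B: "(Basis::(real^'n) set) = (\<lambda>i. axis i 1) ` UNIV" by (auto simp: Basis_vec_def)
  have inj: "inj (\<lambda>i::'n. axis i (1::real))" by (auto simp: inj_def axis_eq_axis)
  show ?thesis unfolding B by (simp add: prod.reindex[OF inj])
qed

lemma emeasure_lborel_box_cart:
  fixes a c :: "real^'n"
  assumes "\<And>i. a$i \<le> c$i"
  shows "emeasure lborel (box a c) = ennreal (\<Prod>i\<in>UNIV. c$i - a$i)"
proof -
  have "\<forall>b\<in>(Basis::(real^'n) set). a \<bullet> b \<le> c \<bullet> b" using assms by (auto simp: Basis_vec_def inner_axis)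
  thus ?thesis by (simp add: emeasure_lborel_box_eq prod_Basis_cart inner_axis)
qed

lemma lborel_signed_perm:
  fixes \<pi> :: "'n::finite \<Rightarrow> 'n" and s :: "'n \<Rightarrow> real"
  assumes bij: "bij \<pi>" and s: "\<And>k. s k = 1 \<or> s k = -1"
  defines "F \<equiv> (\<lambda>x::real^'n. \<chi> k. s k * x $ \<pi> k)"
  shows "distr lborel borel F = lborel"
proof -
  have Fc: "continuous_on UNIV F" unfolding F_def by (intro continuous_intros)
  hence Fm[measurable]: "F \<in> borel_measurable borel" by (rule borel_measurable_continuous_onI)
  define \<rho> where "\<rho> = inv \<pi>"
  have \<pi>\<rho>: "\<pi> (\<rho> m) = m" for m unfolding \<rho>_def using bij by (simp add: bij_is_surj surj_f_inv_f)
  have \<rho>\<pi>: "\<rho> (\<pi> k) = k" for k unfolding \<rho>_def using bij by (simp add: bij_is_inj inv_f_f)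
  have bij\<rho>: "bij \<rho>" unfolding \<rho>_def using bij by (simp add: bij_imp_bij_inv)
  show ?thesis
  proof (rule lborel_eqI[symmetric])
    show "sets (distr lborel borel F) = sets borel" by simp
    fix l u :: "real^'n"
    assume lu: "\<And>b. b \<in> Basis \<Longrightarrow> l \<bullet> b \<le> u \<bullet> b"
    have lu': "l$k \<le> u$k" for k using lu[of "axis k 1"] by (auto simp: Basis_vec_def inner_axis)
    define a :: "real^'n" where "a = (\<chi> m. if s (\<rho> m) = 1 then l $ \<rho> m else - u $ \<rho> m)"
    define c :: "real^'n" where "c = (\<chi> m. if s (\<rho> m) = 1 then u $ \<rho> m else - l $ \<rho> m)"
    have pre: "F -` box l u = box a c"
    proof (rule set_eqI)
      fix x :: "real^'n"
      have "x \<in> F -` box l u \<longleftrightarrow> (\<forall>k. l$k < s k * x$(\<pi> k) \<and> s k * x$(\<pi> k) < u$k)"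
        by (simp add: mem_box_cart F_def)
      also have "\<dots> \<longleftrightarrow> (\<forall>m. l$(\<rho> m) < s (\<rho> m) * x$m \<and> s (\<rho> m) * x$m < u$(\<rho> m))"
      proof
        assume H: "\<forall>k. l$k < s k * x$(\<pi> k) \<and> s k * x$(\<pi> k) < u$k"
        show "\<forall>m. l$(\<rho> m) < s (\<rho> m) * x$m \<and> s (\<rho> m) * x$m < u$(\<rho> m)"
        proof
          fix m show "l$(\<rho> m) < s (\<rho> m) * x$m \<and> s (\<rho> m) * x$m < u$(\<rho> m)"
            using H[rule_format, of "\<rho> m"] by (simp only: \<pi>\<rho>)
        qed
      next
        assume H: "\<forall>m. l$(\<rho> m) < s (\<rho> m) * x$m \<and> s (\<rho> m) * x$m < u$(\<rho> m)"
        show "\<forall>k. l$k < s k * x$(\<pi> k) \<and> s k * x$(\<pi> k) < u$k"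
        proof
          fix k show "l$k < s k * x$(\<pi> k) \<and> s k * x$(\<pi> k) < u$k"
            using H[rule_format, of "\<pi> k"] by (simp only: \<rho>\<pi>)
        qed
      qed
      also have "\<dots> \<longleftrightarrow> (\<forall>m. a$m < x$m \<and> x$m < c$m)"
      proof -
        have "(l$(\<rho> m) < s (\<rho> m) * x$m \<and> s (\<rho> m) * x$m < u$(\<rho> m)) \<longleftrightarrow> (a$m < x$m \<and> x$m < c$m)" for m
          using s[of "\<rho> m"] unfolding a_def c_def by auto
        thus ?thesis by simp
      qed
      finally show "x \<in> F -` box l u \<longleftrightarrow> x \<in> box a c" by (simp add: mem_box_cart)
    qed
    have ac: "c$m - a$m = u$(\<rho> m) - l$(\<rho> m)" for m unfolding a_def c_def by auto
    have "emeasure (distr lborel borel F) (box l u) = emeasure lborel (box a c)"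
      by (simp add: emeasure_distr pre)
    also have "\<dots> = ennreal (\<Prod>m\<in>UNIV. u$(\<rho> m) - l$(\<rho> m))"
    proof -
      have aci: "a$i \<le> c$i" for i using ac[of i] lu'[of "\<rho> i"] by linarith
      show ?thesis by (subst emeasure_lborel_box_cart[OF aci]) (simp add: ac)
    qed
    also have "(\<Prod>m\<in>UNIV. u$(\<rho> m) - l$(\<rho> m)) = (\<Prod>k\<in>UNIV. u$k - l$k)"
      using prod.reindex_bij_betw[OF bij\<rho>[unfolded bij_betw_def[symmetric]], of "\<lambda>k. u$k - l$k"]
      by simp
    also have "\<dots> = (\<Prod>b\<in>Basis. (u - l) \<bullet> b)" by (simp add: prod_Basis_cart inner_axis)
    finally show "emeasure (distr lborel borel F) (box l u) = (\<Prod>b\<in>Basis. (u - l) \<bullet> b)" .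
  qed
qed


definition Fsp :: "('n::finite \<Rightarrow> 'n) \<Rightarrow> ('n \<Rightarrow> real) \<Rightarrow> real^'n \<Rightarrow> real^'n" where
  "Fsp \<pi> s x = (\<chi> k. s k * x $ \<pi> k)"

lemma Fsp_norm:
  assumes bij: "bij \<pi>" and s: "\<And>k. s k = 1 \<or> s k = -1"
  shows "norm (Fsp \<pi> s x) = norm x"
proof -
  have "norm (Fsp \<pi> s x) ^ 2 = (\<Sum>k\<in>UNIV. (x $ \<pi> k)^2)"
    unfolding norm_sq_vec Fsp_def using s by (intro sum.cong refl) (metis mult_1 mult_minus_left power2_minus vec_lambda_beta)
  also have "\<dots> = (\<Sum>m\<in>UNIV. (x $ m)^2)"
    using sum.reindex_bij_betw[OF bij[unfolded bij_betw_def[symmetric]], of "\<lambda>m. (x $ m)^2"] by simp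
  also have "\<dots> = norm x ^ 2" by (simp add: norm_sq_vec)
  finally show ?thesis by (simp add: power2_eq_iff_nonneg)
qed

lemma Fsp_scale: "Fsp \<pi> s (c *\<^sub>R x) = c *\<^sub>R Fsp \<pi> s x"
  unfolding Fsp_def by (simp add: vec_eq_iff)

lemma Fsp_meas[measurable]: "Fsp \<pi> s \<in> borel_measurable borel"
  unfolding Fsp_def by (intro borel_measurable_continuous_onI continuous_intros)

lemma ball_emeasure: "emeasure lborel (ball (0::real^'n) 1) \<noteq> 0" "emeasure lborel (ball (0::real^'n) 1) \<noteq> \<infinity>"
proof -
  have "unit_ball_vol (real CARD('n)) > 0" by (intro unit_ball_vol_pos) simp
  hence h: "unit_ball_vol (real CARD('n)) \<noteq> 0" by linarith
  show "emeasure lborel (ball (0::real^'n) 1) \<noteq> 0" "emeasure lborel (ball (0::real^'n) 1) \<noteq> \<infinity>"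
    by (simp_all add: emeasure_ball h)
qed

lemma uniform_ball_invariant:
  fixes F :: "real^'n \<Rightarrow> real^'n"
  assumes D: "distr lborel borel F = lborel" and Fm[measurable]: "F \<in> borel_measurable borel"
    and nF: "\<And>x. norm (F x) = norm x"
  shows "distr (uniform_measure lborel (ball 0 1)) borel F = uniform_measure lborel (ball 0 1)"
proof (rule measure_eqI)
  show "sets (distr (uniform_measure lborel (ball 0 1)) borel F) = sets (uniform_measure lborel (ball 0 1))"
    by simp
  fix X assume "X \<in> sets (distr (uniform_measure lborel (ball 0 1)) borel F)"
  hence X[measurable]: "X \<in> sets borel" by simp
  let ?B = "ball (0::real^'n) 1"
  have pre: "?B \<inter> F -` X = F -` (?B \<inter> X)" using nF by auto
  have "emeasure lborel (F -` (?B \<inter> X)) = emeasure (distr lborel borel F) (?B \<inter> X)"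
    by (subst emeasure_distr) auto
  also have "\<dots> = emeasure lborel (?B \<inter> X)" by (simp add: D)
  finally have e: "emeasure lborel (?B \<inter> F -` X) = emeasure lborel (?B \<inter> X)" by (simp add: pre)
  have "F -` X \<in> sets lborel" using measurable_sets[OF Fm X] by simp
  thus "emeasure (distr (uniform_measure lborel ?B) borel F) X = emeasure (uniform_measure lborel ?B) X"
  proof -
    have FmU: "F \<in> borel_measurable (uniform_measure lborel ?B)" by measurable
    show ?thesis using e X \<open>F -` X \<in> sets lborel\<close> by (subst emeasure_distr[OF FmU]) auto
  qed
qed


definition U0 :: "(real^'n::finite) measure" where
  "U0 = uniform_measure lborel (ball 0 1)"

definition nrm :: "real^'n::finite \<Rightarrow> real^'n" where
  "nrm x = x /\<^sub>R norm x"

lemma U0_prob: "prob_space (U0 :: (real^'n::finite) measure)"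
  unfolding U0_def by (rule prob_space_uniform_measure[OF ball_emeasure])

lemma space_U0[simp]: "space U0 = UNIV" by (simp add: U0_def)
lemma sets_U0[simp, measurable_cong]: "sets U0 = sets borel" by (simp add: U0_def)

lemma nrm_meas[measurable]: "nrm \<in> borel_measurable borel"
  unfolding nrm_def by measurable

lemma norm_nrm_le: "norm (nrm x) \<le> 1"
  unfolding nrm_def by (cases "x = 0") auto

lemma AE_nrm: "AE x in U0. norm (nrm x) = 1"
  unfolding U0_def
  by (rule AE_uniform_measureI) (auto simp: nrm_def intro: AE_mp[OF AE_lborel_singleton[of 0]])

lemma U0_sym:
  fixes g :: "real^'n::finite \<Rightarrow> real"
  assumes bij: "bij \<pi>" and s: "\<And>k. s k = 1 \<or> s k = -1" and g[measurable]: "g \<in> borel_measurable borel"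
  shows "(\<integral>x. g (nrm x) \<partial>U0) = (\<integral>x. g (Fsp \<pi> s (nrm x)) \<partial>U0)"
proof -
  have D: "distr U0 borel (Fsp \<pi> s) = U0"
    unfolding U0_def Fsp_def
    by (rule uniform_ball_invariant[OF lborel_signed_perm[OF bij s]])
       (auto intro: Fsp_meas[unfolded Fsp_def] Fsp_norm[OF bij s, unfolded Fsp_def])
  have "(\<integral>x. g (nrm x) \<partial>U0) = (\<integral>x. g (nrm x) \<partial>distr U0 borel (Fsp \<pi> s))" by (simp add: D)
  also have "\<dots> = (\<integral>x. g (nrm (Fsp \<pi> s x)) \<partial>U0)" by (rule integral_distr) measurable
  also have "\<dots> = (\<integral>x. g (Fsp \<pi> s (nrm x)) \<partial>U0)"
    by (simp add: nrm_def Fsp_norm[OF bij s] Fsp_scale)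
  finally show ?thesis .
qed


lemma vec_nth_meas[measurable]: "(\<lambda>y::real^'n::finite. y $ i) \<in> borel_measurable borel"
  by (intro borel_measurable_continuous_onI continuous_intros)

lemma nrm_nth_meas[measurable]: "(\<lambda>x::real^'n::finite. nrm x $ i) \<in> borel_measurable borel"
  using measurable_comp[OF nrm_meas vec_nth_meas] by (simp add: comp_def)

lemma nrm_comp_bound: "\<bar>nrm x $ i\<bar> \<le> 1"
  using component_le_norm_cart[of "nrm x" i] norm_nrm_le[of x] by linarith

lemma int_comp_prod: "integrable U0 (\<lambda>x. nrm x $ i * nrm x $ j)"
proof -
  interpret prob_space U0 by (rule U0_prob)
  show ?thesis
  proof (rule integrable_const_bound[where B=1])
    show "AE x in U0. norm (nrm x $ i * nrm x $ j) \<le> 1"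
    proof (rule AE_I2)
      fix x show "norm (nrm x $ i * nrm x $ j) \<le> 1"
        using nrm_comp_bound[of x i] nrm_comp_bound[of x j] by (simp add: abs_mult mult_le_one)
    qed
  qed measurable
qed

lemma U0_moments:
  fixes i j :: "'n::finite"
  shows "(\<integral>x. nrm x $ i * nrm x $ j \<partial>U0) = (if i = j then 1 / CARD('n) else 0)"
proof -
  interpret prob_space "U0 :: (real^'n) measure" by (rule U0_prob)
  define E where "E i j = (\<integral>x. nrm x $ i * nrm x $ j \<partial>(U0 :: (real^'n) measure))" for i j
  have off: "E i j = 0" if "i \<noteq> j" for i j
  proof -
    define s :: "'n \<Rightarrow> real" where "s k = (if k = i then -1 else 1)" for k
    have "E i j = (\<integral>x. (\<lambda>y. y $ i * y $ j) (Fsp id s (nrm x)) \<partial>U0)"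
      unfolding E_def by (rule U0_sym[where g = "\<lambda>y. y $ i * y $ j"]) (auto simp: s_def)
    also have "\<dots> = (\<integral>x. - (nrm x $ i * nrm x $ j) \<partial>U0)"
      using that by (simp add: Fsp_def s_def)
    also have "\<dots> = - E i j" unfolding E_def by simp
    finally show ?thesis by simp
  qed
  have diag: "E i i = E j j" for i j
  proof -
    define \<pi> :: "'n \<Rightarrow> 'n" where "\<pi> k = (if k = i then j else if k = j then i else k)" for k
    have bij: "bij \<pi>" by (rule bij_betwI[where g=\<pi>]) (auto simp: \<pi>_def)
    have "E i i = (\<integral>x. (\<lambda>y. y $ i * y $ i) (Fsp \<pi> (\<lambda>_. 1) (nrm x)) \<partial>U0)"
      unfolding E_def by (rule U0_sym[where g = "\<lambda>y. y $ i * y $ i", OF bij]) auto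
    also have "\<dots> = E j j" unfolding E_def by (simp add: Fsp_def \<pi>_def)
    finally show ?thesis .
  qed
  have tot: "(\<Sum>i\<in>UNIV. E i i) = 1"
  proof -
    have "(\<Sum>i\<in>UNIV. E i i) = (\<integral>x. (\<Sum>i\<in>(UNIV::'n set). nrm x $ i * nrm x $ i) \<partial>U0)"
      unfolding E_def by (simp add: int_comp_prod)
    also have "\<dots> = (\<integral>x. 1 \<partial>(U0::(real^'n) measure))"
    proof (rule integral_cong_AE)
      show "AE x in U0. (\<Sum>i\<in>(UNIV::'n set). nrm x $ i * nrm x $ i) = 1"
        using AE_nrm
      proof eventually_elim
        case (elim x)
        have "(\<Sum>i\<in>UNIV. (nrm x $ i)^2) = 1" using norm_sq_vec[of "nrm x"] elim by simp
        thus ?case by (simp add: power2_eq_square)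
      qed
    qed measurable
    also have "\<dots> = 1" using prob_space by simp
    finally show ?thesis .
  qed
  obtain i0 :: 'n where True by blast
  have "(\<Sum>i\<in>UNIV. E i i) = real CARD('n) * E i0 i0"
  proof -
    have "(\<Sum>i\<in>UNIV. E i i) = (\<Sum>i\<in>(UNIV::'n set). E i0 i0)" by (rule sum.cong[OF refl diag])
    thus ?thesis by simp
  qed
  hence "E i0 i0 = 1 / CARD('n)" using tot by (simp add: field_simps)
  hence "E i i = 1 / CARD('n)" for i using diag[of i i0] by simp
  thus ?thesis using off unfolding E_def by auto
qed

lemma U0_second_moment:
  fixes w :: "real^'n::finite"
  shows "(\<integral>x. (w \<bullet> nrm x)^2 \<partial>U0) = norm w ^ 2 / CARD('n)"
proof -
  have "(\<integral>x. (w \<bullet> nrm x)^2 \<partial>U0) = (\<integral>x. (\<Sum>i\<in>UNIV. \<Sum>j\<in>UNIV. (w$i * w$j) * (nrm x $ i * nrm x $ j)) \<partial>U0)"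
    by (simp add: inner_vec_def power2_eq_square sum_product mult_ac)
  also have "\<dots> = (\<Sum>i\<in>UNIV. \<Sum>j\<in>UNIV. (w$i * w$j) * (\<integral>x. nrm x $ i * nrm x $ j \<partial>U0))"
    by (simp add: int_comp_prod)
  also have "\<dots> = (\<Sum>i\<in>UNIV. (w$i)^2 / CARD('n))"
    by (simp add: U0_moments power2_eq_square if_distrib cong: if_cong)
  also have "\<dots> = norm w ^ 2 / CARD('n)" by (simp add: norm_sq_vec sum_divide_distrib)
  finally show ?thesis .
qed


lemma schatten_eval:
  fixes T :: "real^'n^'m"
  assumes sv: "sq_sing_vals T = image_mset lam (mset_set UNIV)" and l0: "\<And>k. lam k \<ge> 0"
    and p: "p \<ge> 1"
  shows "schatten_norm T 2 ^ (2 * p) = (\<Sum>k\<in>UNIV. lam k) ^ p"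
    and "schatten_norm T (2 * p) ^ (2 * p) = (\<Sum>k\<in>UNIV. lam k ^ p)"
proof -
  have base: "schatten_norm T q = (\<Sum>k\<in>UNIV. sqrt (lam k) ^ q) powr (1 / real q)" for q
    unfolding schatten_norm_def sv by (simp add: multiset.map_comp sum_unfold_sum_mset comp_def)
  have S1: "(\<Sum>k\<in>UNIV. sqrt (lam k) ^ 2) = (\<Sum>k\<in>UNIV. lam k)" using l0 by simp
  have S10: "(\<Sum>k\<in>UNIV. lam k) \<ge> 0" using l0 by (simp add: sum_nonneg)
  have "schatten_norm T 2 = sqrt (\<Sum>k\<in>UNIV. lam k)"
    unfolding base S1 using powr_half_sqrt[OF S10] by simp
  thus "schatten_norm T 2 ^ (2 * p) = (\<Sum>k\<in>UNIV. lam k) ^ p"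
    using S10 by (simp add: power_mult)
  have Sp: "(\<Sum>k\<in>UNIV. sqrt (lam k) ^ (2 * p)) = (\<Sum>k\<in>UNIV. lam k ^ p)"
    using l0 by (simp add: power_mult)
  have Sp0: "(\<Sum>k\<in>UNIV. lam k ^ p) \<ge> 0" using l0 by (simp add: sum_nonneg)
  have "schatten_norm T (2 * p) = root (2 * p) (\<Sum>k\<in>UNIV. lam k ^ p)"
    unfolding base Sp using root_powr_inverse[of "2 * p" "\<Sum>k\<in>UNIV. lam k ^ p"] Sp0 p by simp
  thus "schatten_norm T (2 * p) ^ (2 * p) = (\<Sum>k\<in>UNIV. lam k ^ p)"
    using Sp0 p by simp
qed

lemma pars_from_expand:
  fixes u :: "'n::finite \<Rightarrow> real^'n"
  assumes un: "\<And>k. norm (u k) = 1" and uo: "\<And>k j. k \<noteq> j \<Longrightarrow> u k \<bullet> u j = 0"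
    and ex: "\<And>y. (\<Sum>k\<in>UNIV. (y \<bullet> u k) *\<^sub>R u k) = y"
  shows "(\<Sum>k\<in>UNIV. (u k \<bullet> y)^2) = norm y ^ 2"
proof -
  have "norm y ^ 2 = y \<bullet> (\<Sum>k\<in>UNIV. (y \<bullet> u k) *\<^sub>R u k)" by (simp add: ex power2_norm_eq_inner)
  also have "\<dots> = (\<Sum>k\<in>UNIV. (u k \<bullet> y)^2)"
    by (simp add: inner_sum_right power2_eq_square inner_commute)
  finally show ?thesis ..
qed

lemma mv_meas[measurable]: "((*v) (T::real^'n^'m)) \<in> borel_measurable borel"
  by (intro borel_measurable_continuous_onI matrix_vector_mult_linear_continuous_on)

theorem corollary5p2:
  fixes T :: "real^'n^'m" and p :: nat
  assumes "p \<ge> 1"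
  shows "(1 / real CARD('n) ^ p) * schatten_norm T 2 ^ (2 * p) \<le> Fp p T
         \<and> Fp p T \<le> (1 / real CARD('n)) * schatten_norm T (2 * p) ^ (2 * p)
         \<and> (\<forall>G (x :: real^'n). finite_orth_group G \<and> acts_irreducibly G \<longrightarrow>
              (1 / real CARD('n) ^ p) * schatten_norm T 2 ^ (2 * p) * norm x ^ (2 * p)
                \<le> (1 / real (card G)) * (\<Sum>U\<in>G. norm (T *v (U *v x)) ^ (2 * p))
              \<and> (1 / real (card G)) * (\<Sum>U\<in>G. norm (T *v (U *v x)) ^ (2 * p))
                \<le> (1 / real CARD('n)) * schatten_norm T (2 * p) ^ (2 * p) * norm x ^ (2 * p))"
proof (rule T_decomp[of T])
  note p = assms
  fix u :: "'n \<Rightarrow> real^'n" and lam :: "'n \<Rightarrow> real"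
  assume un: "\<And>k. norm (u k) = 1" and uo: "\<And>k j. k \<noteq> j \<Longrightarrow> u k \<bullet> u j = 0"
    and ex: "\<And>y. (\<Sum>k\<in>UNIV. (y \<bullet> u k) *\<^sub>R u k) = y"
    and l0: "\<And>k. lam k \<ge> 0"
    and sv: "sq_sing_vals T = image_mset lam (mset_set UNIV)"
    and nT: "\<And>y. norm (T *v y) ^ 2 = (\<Sum>k\<in>UNIV. lam k * (u k \<bullet> y)^2)"
  have pars: "\<And>y. (\<Sum>k\<in>UNIV. (u k \<bullet> y)^2) = norm y ^ 2" by (rule pars_from_expand[OF un uo ex])
  note sch = schatten_eval[OF sv l0 p]
  have nT2: "norm (T *v y) ^ (2 * p) = (\<Sum>k\<in>UNIV. lam k * (u k \<bullet> y)^2) ^ p" for y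
    by (simp add: power_mult nT)
  have low: "(1 / real CARD('n) ^ p) * (\<Sum>k\<in>UNIV. lam k) ^ p = ((\<Sum>k\<in>UNIV. lam k) / CARD('n)) ^ p"
    by (simp add: power_divide)
  have Fp_eq: "Fp p T = (\<integral>x. (\<Sum>k\<in>UNIV. lam k * (u k \<bullet> nrm x)^2) ^ p \<partial>U0)"
  proof -
    have "(sphere_measure :: (real^'n) measure) = distr U0 borel nrm" unfolding sphere_measure_def U0_def nrm_def ..
    hence "Fp p T = (\<integral>\<theta>. norm (T *v \<theta>) ^ (2 * p) \<partial>distr U0 borel nrm)" unfolding Fp_def by simp
    also have "\<dots> = (\<integral>x. norm (T *v nrm x) ^ (2 * p) \<partial>U0)" by (rule integral_distr) measurable
    finally show ?thesis by (simp add: nT2)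
  qed
  interpret U: prob_space "U0 :: (real^'n) measure" by (rule U0_prob)
  have sph_Ew: "\<And>k. (\<integral>x. (u k \<bullet> nrm x)^2 \<partial>U0) = 1^2 / CARD('n)"
    using U0_second_moment[of "u _"] un by simp
  note S = U.avg_core[of nrm 1 u lam p, OF nrm_meas[unfolded measurable_cong_sets[OF sets_U0[symmetric] refl]]
      norm_nrm_le AE_nrm _ sph_Ew l0 un pars p]
  have part1: "(1 / real CARD('n) ^ p) * schatten_norm T 2 ^ (2 * p) \<le> Fp p T"
    using S(1) by (simp add: Fp_eq sch power_divide)
  have part2: "Fp p T \<le> (1 / real CARD('n)) * schatten_norm T (2 * p) ^ (2 * p)"
    using S(2) by (simp add: Fp_eq sch)
  have part3: "(1 / real CARD('n) ^ p) * schatten_norm T 2 ^ (2 * p) * norm x ^ (2 * p)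
                \<le> (1 / real (card G)) * (\<Sum>U\<in>G. norm (T *v (U *v x)) ^ (2 * p))
              \<and> (1 / real (card G)) * (\<Sum>U\<in>G. norm (T *v (U *v x)) ^ (2 * p))
                \<le> (1 / real CARD('n)) * schatten_norm T (2 * p) ^ (2 * p) * norm x ^ (2 * p)"
    if fg: "finite_orth_group G" and irr: "acts_irreducibly G" for G and x :: "real^'n"
  proof -
    have fin: "finite G" and orth: "\<And>U. U \<in> G \<Longrightarrow> orthogonal_matrix U" and ne: "G \<noteq> {}"
      using fg unfolding finite_orth_group_def by auto
    interpret C: prob_space "uniform_count_measure G" by (rule prob_space_uniform_count_measure[OF fin ne])
    have cG: "real (card G) > 0" using fin ne by (simp add: card_gt_0_iff)
    have meas: "(\<lambda>U. U *v x) \<in> borel_measurable (uniform_count_measure G)"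
      by (simp add: measurable_cong_sets[OF sets_uniform_count_measure_count_space refl])
    have bnd: "\<And>U. U \<in> space (uniform_count_measure G) \<Longrightarrow> norm (U *v x) \<le> norm x"
      by (simp add: space_uniform_count_measure orth_norm orth)
    have AEn: "AE U in uniform_count_measure G. norm (U *v x) = norm x"
      by (rule AE_I2) (simp add: space_uniform_count_measure orth_norm orth)
    have Ew: "\<And>k. (\<integral>U. (u k \<bullet> (U *v x))^2 \<partial>uniform_count_measure G) = norm x ^ 2 / CARD('n)"
      using cG by (simp add: integral_uniform_count_measure[OF fin] group_second_moment[OF fg irr] un)
    note R = C.avg_core[of "\<lambda>U. U *v x" "norm x" u lam p, OF meas bnd AEn norm_ge_zero Ew l0 un pars p]
    have avg: "(1 / real (card G)) * (\<Sum>U\<in>G. norm (T *v (U *v x)) ^ (2 * p))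
        = (\<integral>U. (\<Sum>k\<in>UNIV. lam k * (u k \<bullet> (U *v x))^2) ^ p \<partial>uniform_count_measure G)"
      by (simp add: integral_uniform_count_measure[OF fin] nT2)
    show ?thesis using R unfolding avg by (simp add: sch power_divide)
  qed
  show ?thesis using part1 part2 part3 by blast
qed

end
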